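(* Let $G$ be a vigorous subgroup of $\operatorname{Homeo}(\mathfrak{C})$ generated by its elements of small support. Let $B,C,D\in K_{\mathfrak{C}}$ be pairwise disjoint with $B\cup C\cup D=\mathfrak{C}$. Let $\delta\in\operatorname{pstab}_G(D)$ satisfy $B\delta\subsetneq B$. Let $\varepsilon:\mathfrak{C}\to\mathfrak{C}$ be the injective map agreeing with $\delta$ on $B$ and equal to the identity on $C\cup D$. Let $f:\operatorname{Homeo}(\mathfrak{C})\to\operatorname{Homeo}(\mathfrak{C})$ send $\gamma$ to the homeomorphism which, for $p\in\mathfrak{C}\varepsilon$, maps $p$ to $((p\varepsilon^{-1})\gamma)\varepsilon$, and fixes every point of $\mathfrak{C}\setminus\mathfrak{C}\varepsilon$. Then $f|_G$ is an isomorphism from $G$ onto $\operatorname{pstab}_G(\mathfrak{C}\setminus\mathfrak{C}\varepsilon)$.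
   Context: $\mathfrak{C}$ denotes a Cantor space (a space homeomorphic to $\{0,1\}^\omega$). Groups of homeomorphisms act on the right, and products are composed left to right. $K_{\mathfrak{C}}$ denotes the set of non-empty proper clopen subsets of $\mathfrak{C}$. For $\gamma\in\operatorname{Homeo}(\mathfrak{C})$, $\operatorname{supp}(\gamma)=\{p\in\mathfrak{C}: p\gamma\neq p\}$. For $G\le\operatorname{Homeo}(\mathfrak{C})$ and $A\subseteq\mathfrak{C}$, $\operatorname{pstab}_G(A)=\{g\in G: pg=p \text{ for all } p\in A\}$. A subset $S\subseteq \operatorname{Homeo}(\mathfrak{C})$ is vigorous if for all clopen $A,B,C\subseteq\mathfrak{C}$ with $B,C$ non-empty proper subsets of $A$ there is $\gamma\in S$ with $\operatorname{supp}(\gamma)\subseteq A$ and $B\gamma\subseteq C$. $G$ is generated by its elements of small support if $G$ is generated by $\{\gamma\in G: \operatorname{supp}(\gamma)\subseteq A \text{ for some } A\in K_{\mathfrak{C}}\}$. *)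

theory Defs
  imports "HOL-Analysis.Analysis" "HOL-Algebra.Algebra"
begin

type_synonym cpt = "nat \<Rightarrow> bool"

definition cantor :: "cpt topology" where
  "cantor = product_topology (\<lambda>_. discrete_topology (UNIV :: bool set)) UNIV"

text \<open>Homeo(C) as a group; maps act on the right, products compose left to right,
  so the product g h is "first g, then h", i.e. h o g.\<close>
definition Homeo :: "(cpt \<Rightarrow> cpt) monoid" where
  "Homeo = \<lparr>carrier = {h. homeomorphic_map cantor cantor h}, mult = (\<lambda>g h. h \<circ> g), one = id\<rparr>"

definition clopen_C :: "cpt set \<Rightarrow> bool" where
  "clopen_C A \<longleftrightarrow> openin cantor A \<and> closedin cantor A"

definition K_C :: "cpt set set" where
  "K_C = {A. clopen_C A \<and> A \<noteq> {} \<and> A \<noteq> topspace cantor}"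

definition supp :: "(cpt \<Rightarrow> cpt) \<Rightarrow> cpt set" where
  "supp g = {p. g p \<noteq> p}"

definition pstab :: "(cpt \<Rightarrow> cpt) set \<Rightarrow> cpt set \<Rightarrow> (cpt \<Rightarrow> cpt) set" where
  "pstab G A = {g \<in> G. \<forall>p\<in>A. g p = p}"

definition vigorous :: "(cpt \<Rightarrow> cpt) set \<Rightarrow> bool" where
  "vigorous S \<longleftrightarrow> (\<forall>A B C. clopen_C A \<and> clopen_C B \<and> clopen_C C
      \<and> B \<noteq> {} \<and> C \<noteq> {} \<and> B \<subset> A \<and> C \<subset> A
      \<longrightarrow> (\<exists>g\<in>S. supp g \<subseteq> A \<and> g ` B \<subseteq> C))"

definition gen_by_small_support :: "(cpt \<Rightarrow> cpt) set \<Rightarrow> bool" where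
  "gen_by_small_support G \<longleftrightarrow>
     G = generate Homeo {g \<in> G. \<exists>A\<in>K_C. supp g \<subseteq> A}"

end

theory Submission imports Defs begin

lemma top_cantor: "topspace cantor = UNIV"
  unfolding cantor_def by (simp add: topspace_product_topology PiE_UNIV_domain)

lemma homeo_carrier: "h \<in> carrier Homeo \<longleftrightarrow> homeomorphic_map cantor cantor h"
  by (simp add: Homeo_def)

lemma homeo_bij: "h \<in> carrier Homeo \<Longrightarrow> bij h"
  unfolding homeo_carrier bij_def
  by (metis homeomorphic_imp_injective_map homeomorphic_imp_surjective_map top_cantor)

lemma homeo_inv: assumes "h \<in> carrier Homeo" shows "inv_into UNIV h \<in> carrier Homeo"
proof -
  obtain g where g: "homeomorphic_maps cantor cantor h g"
    using assms homeomorphic_map_maps homeo_carrier by blast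
  then have "homeomorphic_map cantor cantor g" "\<forall>x. g (h x) = x" "\<forall>y. h (g y) = y"
    by (auto simp: homeomorphic_maps_map top_cantor)
  moreover have "inv_into UNIV h = g" using calculation by (intro Hilbert_Choice.inv_equality) auto
  ultimately show ?thesis by (simp add: homeo_carrier)
qed

lemma homeo_comp: "g \<in> carrier Homeo \<Longrightarrow> h \<in> carrier Homeo \<Longrightarrow> h \<circ> g \<in> carrier Homeo"
  unfolding homeo_carrier using homeomorphic_map_compose by blast

lemma group_Homeo: "group Homeo"
proof (rule groupI)
  show "\<And>x y. x \<in> carrier Homeo \<Longrightarrow> y \<in> carrier Homeo \<Longrightarrow> x \<otimes>\<^bsub>Homeo\<^esub> y \<in> carrier Homeo"
    by (simp add: homeo_comp[unfolded Homeo_def, simplified] Homeo_def)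
  show "\<one>\<^bsub>Homeo\<^esub> \<in> carrier Homeo" by (simp add: Homeo_def)
  show "\<And>x y z. x \<in> carrier Homeo \<Longrightarrow> y \<in> carrier Homeo \<Longrightarrow> z \<in> carrier Homeo \<Longrightarrow>
    x \<otimes>\<^bsub>Homeo\<^esub> y \<otimes>\<^bsub>Homeo\<^esub> z = x \<otimes>\<^bsub>Homeo\<^esub> (y \<otimes>\<^bsub>Homeo\<^esub> z)"
    by (simp add: Homeo_def comp_assoc)
  show "\<And>x. x \<in> carrier Homeo \<Longrightarrow> \<one>\<^bsub>Homeo\<^esub> \<otimes>\<^bsub>Homeo\<^esub> x = x" by (simp add: Homeo_def)
  show "\<And>x. x \<in> carrier Homeo \<Longrightarrow> \<exists>y\<in>carrier Homeo. y \<otimes>\<^bsub>Homeo\<^esub> x = \<one>\<^bsub>Homeo\<^esub>"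
  proof -
    fix x assume x: "x \<in> carrier Homeo"
    have "x \<circ> inv_into UNIV x = id" using homeo_bij[OF x] by (intro ext) (simp add: bij_def surj_f_inv_f)
    then show "\<exists>y\<in>carrier Homeo. y \<otimes>\<^bsub>Homeo\<^esub> x = \<one>\<^bsub>Homeo\<^esub>"
      using homeo_inv[OF x] by (auto simp: Homeo_def)
  qed
qed

lemma Homeo_inv: assumes "h \<in> carrier Homeo" shows "inv\<^bsub>Homeo\<^esub> h = inv_into UNIV h"
proof (rule group.inv_equality[OF group_Homeo])
  show "inv_into UNIV h \<otimes>\<^bsub>Homeo\<^esub> h = \<one>\<^bsub>Homeo\<^esub>"
    using homeo_bij[OF assms] by (simp add: Homeo_def fun_eq_iff bij_def surj_f_inv_f)
qed (use assms homeo_inv in auto)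

lemma clopen_image: assumes "h \<in> carrier Homeo" "clopen_C U" shows "clopen_C (h ` U)"
  using assms unfolding clopen_C_def homeo_carrier
  by (simp add: homeomorphic_map_openness homeomorphic_map_closedness top_cantor)

lemma clopen_Int: "clopen_C A \<Longrightarrow> clopen_C B \<Longrightarrow> clopen_C (A \<inter> B)"
  unfolding clopen_C_def by auto
lemma clopen_Un: "clopen_C A \<Longrightarrow> clopen_C B \<Longrightarrow> clopen_C (A \<union> B)"
  unfolding clopen_C_def by auto
lemma clopen_Compl: "clopen_C A \<Longrightarrow> clopen_C (- A)"
  unfolding clopen_C_def using top_cantor
  by (metis Compl_eq_Diff_UNIV closedin_def openin_closedin_eq)
lemma clopen_UNIV: "clopen_C UNIV"
  unfolding clopen_C_def by (metis closedin_topspace openin_topspace top_cantor)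


abbreviation iv :: "('a \<Rightarrow> 'b) \<Rightarrow> 'b \<Rightarrow> 'a" where "iv h \<equiv> inv_into UNIV h"

lemma iv_left: "bij h \<Longrightarrow> iv h (h x) = x" by (simp add: bij_is_inj)
lemma iv_right: "bij h \<Longrightarrow> h (iv h x) = x" by (simp add: bij_is_surj surj_f_inv_f)

locale L2 =
  fixes G :: "(cpt \<Rightarrow> cpt) set" and B C D :: "cpt set" and \<delta> \<epsilon> :: "cpt \<Rightarrow> cpt"
    and f :: "(cpt \<Rightarrow> cpt) \<Rightarrow> (cpt \<Rightarrow> cpt)"
  assumes sg: "subgroup G Homeo" and vig: "vigorous G" and gen: "gen_by_small_support G"
    and KB: "B \<in> K_C" and KC: "C \<in> K_C" and KD: "D \<in> K_C"
    and BC: "B \<inter> C = {}" and BD: "B \<inter> D = {}" and CD: "C \<inter> D = {}"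
    and BCD: "B \<union> C \<union> D = topspace cantor"
    and dG: "\<delta> \<in> pstab G D" and dB: "\<delta> ` B \<subset> B"
    and eps_def: "\<epsilon> = (\<lambda>p. if p \<in> B then \<delta> p else p)"
    and f_def: "f = (\<lambda>\<gamma> p. if p \<in> range \<epsilon> then \<epsilon> (\<gamma> (inv_into UNIV \<epsilon> p)) else p)"
begin

lemma G_carr: "g \<in> G \<Longrightarrow> g \<in> carrier Homeo"
  using sg subgroup.subset by blast
lemma G_bij: "g \<in> G \<Longrightarrow> bij g" using G_carr homeo_bij by blast
lemma G_inj: "g \<in> G \<Longrightarrow> inj g" using G_bij bij_is_inj by blast
lemma G_comp: "g \<in> G \<Longrightarrow> h \<in> G \<Longrightarrow> h \<circ> g \<in> G"
  using subgroup.m_closed[OF sg, of g h] by (simp add: Homeo_def)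
lemma G_inv: "g \<in> G \<Longrightarrow> iv g \<in> G"
  using subgroup.m_inv_closed[OF sg, of g] Homeo_inv G_carr by simp
lemma G_id: "id \<in> G"
  using subgroup.one_closed[OF sg] by (simp add: Homeo_def)

lemma UNIV_BCD: "B \<union> C \<union> D = UNIV" using BCD top_cantor by simp
lemma clB: "clopen_C B" and neB: "B \<noteq> {}" and nuB: "B \<noteq> UNIV"
  using KB top_cantor by (auto simp: K_C_def)
lemma clC: "clopen_C C" and neC: "C \<noteq> {}" and nuC: "C \<noteq> UNIV"
  using KC top_cantor by (auto simp: K_C_def)
lemma clD: "clopen_C D" and neD: "D \<noteq> {}" and nuD: "D \<noteq> UNIV"
  using KD top_cantor by (auto simp: K_C_def)

lemma dG': "\<delta> \<in> G" and dD: "\<And>p. p \<in> D \<Longrightarrow> \<delta> p = p"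
  using dG by (auto simp: pstab_def)
lemma dbij: "bij \<delta>" using dG' G_bij by blast

lemma eps_B: "p \<in> B \<Longrightarrow> \<epsilon> p = \<delta> p" and eps_nB: "p \<notin> B \<Longrightarrow> \<epsilon> p = p"
  by (simp_all add: eps_def)

lemma inj_eps: "inj \<epsilon>"
proof (rule injI)
  fix x y assume "\<epsilon> x = \<epsilon> y"
  then show "x = y" using dB dbij[THEN bij_is_inj] unfolding eps_def
    by (auto split: if_splits dest: injD)
qed

lemma ee: "iv \<epsilon> (\<epsilon> q) = q" using inj_eps by simp
lemma ee2: "p \<in> range \<epsilon> \<Longrightarrow> \<epsilon> (iv \<epsilon> p) = p" by (simp add: f_inv_into_f)

lemma rng_nB: "p \<notin> B \<Longrightarrow> p \<in> range \<epsilon> \<and> iv \<epsilon> p = p"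
  using eps_nB[of p] ee[of p] by (metis rangeI)
lemma rng_dB: "q \<in> B \<Longrightarrow> \<delta> q \<in> range \<epsilon> \<and> iv \<epsilon> (\<delta> q) = q"
  using eps_B[of q] ee[of q] by (metis rangeI)

lemma F_apply: "f g p = (if p \<in> range \<epsilon> then \<epsilon> (g (iv \<epsilon> p)) else p)"
  by (simp add: f_def)

lemma F_eps: "f g (\<epsilon> q) = \<epsilon> (g q)"
  by (simp add: F_apply ee)

lemma F_mult: "f (g \<circ> h) = f g \<circ> f h"
  by (rule ext) (auto simp: F_apply ee)

lemma F_id: "f id = id"
  by (rule ext) (auto simp: F_apply ee2)

lemma F_inv: assumes "bij h" shows "f (iv h) = iv (f h)"
proof -
  have "f h \<circ> f (iv h) = id"
    using F_mult[of h "iv h", symmetric] assms F_id by (simp add: o_def iv_right flip: id_def)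
  moreover have "f (iv h) \<circ> f h = id"
    using F_mult[of "iv h" h, symmetric] assms F_id by (simp add: o_def iv_left flip: id_def)
  ultimately show ?thesis by (metis inv_unique_comp)
qed


lemma eps_BD: assumes "q \<in> B \<union> D" shows "\<epsilon> q = \<delta> q"
proof (cases "q \<in> B")
  case True then show ?thesis by (rule eps_B)
next
  case False then have "q \<in> D" using assms by blast
  then show ?thesis using eps_nB[OF False] dD by simp
qed

lemma F_Q: assumes "inj h" "\<And>p. p \<in> B \<Longrightarrow> h p = p" shows "f h = h"
proof (rule ext)
  fix p
  show "f h p = h p"
  proof (cases "p \<in> range \<epsilon>")
    case True
    then obtain q where q: "p = \<epsilon> q" by blast
    have "f h p = \<epsilon> (h q)" using q F_eps by simp
    also have "\<dots> = h p"
    proof (cases "q \<in> B")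
      case True
      then have "p \<in> B" using dB q eps_B by auto
      then show ?thesis using q True assms(2) eps_B by simp
    next
      case False
      have "h q \<notin> B"
      proof
        assume "h q \<in> B"
        then have "h (h q) = h q" using assms(2) by blast
        then have "h q = q" using assms(1) by (simp add: inj_eq)
        then show False using False \<open>h q \<in> B\<close> by simp
      qed
      then show ?thesis using q False eps_nB by simp
    qed
    finally show ?thesis .
  next
    case False
    then have "p \<in> B" using rng_nB by blast
    then show ?thesis using False assms(2) by (simp add: F_apply)
  qed
qed

lemma F_P: assumes "inj h" "\<And>p. p \<in> C \<Longrightarrow> h p = p" shows "f h = \<delta> \<circ> h \<circ> iv \<delta>"
proof (rule ext)
  fix p
  define q where "q = iv \<delta> p"
  have dq: "\<delta> q = p" using q_def dbij iv_right by metis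
  show "f h p = (\<delta> \<circ> h \<circ> iv \<delta>) p"
  proof (cases "q \<in> C")
    case False
    then have qBD: "q \<in> B \<union> D" using UNIV_BCD by auto
    have hq: "h q \<in> B \<union> D"
    proof (rule ccontr)
      assume "h q \<notin> B \<union> D"
      then have "h q \<in> C" using UNIV_BCD by auto
      then have "h (h q) = h q" using assms(2) by blast
      then have "h q = q" using assms(1) by (simp add: inj_eq)
      then show False using False \<open>h q \<in> C\<close> by simp
    qed
    have "f h p = f h (\<epsilon> q)" using eps_BD[OF qBD] dq by simp
    also have "\<dots> = \<epsilon> (h q)" by (rule F_eps)
    also have "\<dots> = \<delta> (h q)" by (rule eps_BD[OF hq])
    finally show ?thesis by (simp add: q_def)
  next
    case True
    have rhs: "(\<delta> \<circ> h \<circ> iv \<delta>) p = p" using True assms(2) dq by (simp add: q_def)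
    show ?thesis
    proof (cases "p \<in> range \<epsilon>")
      case True
      then obtain r where r: "p = \<epsilon> r" by blast
      have "r \<in> C"
      proof (rule ccontr)
        assume "r \<notin> C"
        then have "r \<in> B \<union> D" using UNIV_BCD by auto
        then have "\<delta> r = \<delta> q" using eps_BD r dq by simp
        then have "r = q" using bij_is_inj[OF dbij] by (simp add: inj_eq)
        then show False using \<open>r \<notin> C\<close> \<open>q \<in> C\<close> by simp
      qed
      then show ?thesis using rhs r F_eps assms(2) by simp
    next
      case False
      then show ?thesis using rhs by (simp add: F_apply)
    qed
  qed
qed

lemma vig_use:
  assumes "clopen_C A" "clopen_C U" "clopen_C V" "U \<noteq> {}" "V \<noteq> {}" "U \<subset> A" "V \<subset> A"
  obtains g where "g \<in> G" "\<And>p. p \<notin> A \<Longrightarrow> g p = p" "g ` U \<subseteq> V"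
proof -
  have "\<exists>g\<in>G. supp g \<subseteq> A \<and> g ` U \<subseteq> V"
    by (rule vig[unfolded vigorous_def, rule_format]) (use assms in auto)
  then obtain g where "g \<in> G" "supp g \<subseteq> A" "g ` U \<subseteq> V" by blast
  then show ?thesis using that unfolding supp_def by blast
qed


lemma F_P_G: assumes "h \<in> G" "\<And>p. p \<in> C \<Longrightarrow> h p = p" shows "f h \<in> G"
  using F_P[OF G_inj[OF assms(1)] assms(2)] G_comp G_inv dG' assms(1) by (metis comp_assoc)

lemma F_Q_G: assumes "h \<in> G" "\<And>p. p \<in> B \<Longrightarrow> h p = p" shows "f h \<in> G"
  using F_Q[OF G_inj[OF assms(1)] assms(2)] assms(1) by simp

lemma part1_small:
  assumes gG: "\<gamma> \<in> G" and A: "A \<in> K_C" and sA: "supp \<gamma> \<subseteq> A"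
  shows "f \<gamma> \<in> G"
proof -
  define W where "W = - A"
  have clW: "clopen_C W" using A clopen_Compl by (simp add: W_def K_C_def)
  have neW: "W \<noteq> {}" using A top_cantor by (auto simp: W_def K_C_def)
  have clCD: "clopen_C (C \<union> D)" and clBD: "clopen_C (B \<union> D)"
    using clB clC clD clopen_Un by auto
  have CsCD: "C \<subset> C \<union> D" using neD CD by blast
  have DsCD: "D \<subset> C \<union> D" using neC CD by blast
  have DsBD: "D \<subset> B \<union> D" using neB BD by blast
  have "\<exists>h\<in>G. f h \<in> G \<and> h ` C \<subseteq> W"
  proof (cases "C \<subseteq> W")
    case True then show ?thesis by (intro bexI[of _ id]) (use G_id F_id in auto)
  next
    case nCW: False
    show ?thesis
    proof (cases "W \<inter> (C \<union> D) = {}")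
      case False
      have "W \<inter> (C \<union> D) \<subset> C \<union> D" using nCW by blast
      then obtain h where h: "h \<in> G" "\<And>p. p \<notin> C \<union> D \<Longrightarrow> h p = p" "h ` C \<subseteq> W \<inter> (C \<union> D)"
        using vig_use[OF clCD clC clopen_Int[OF clW clCD] neC False CsCD] by blast
      have "f h \<in> G" by (intro F_Q_G[OF h(1)] h(2)) (use BC BD in blast)
      then show ?thesis using h by blast
    next
      case True
      then have WB: "W \<subseteq> B" using UNIV_BCD by blast
      have WsBD: "W \<subset> B \<union> D" using WB neD BD by blast
      obtain h1 where h1: "h1 \<in> G" "\<And>p. p \<notin> C \<union> D \<Longrightarrow> h1 p = p" "h1 ` C \<subseteq> D"
        using vig_use[OF clCD clC clD neC neD CsCD DsCD] by blast
      obtain h2 where h2: "h2 \<in> G" "\<And>p. p \<notin> B \<union> D \<Longrightarrow> h2 p = p" "h2 ` D \<subseteq> W"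
        using vig_use[OF clBD clD clW neD neW DsBD WsBD] by blast
      have f1: "f h1 \<in> G" by (intro F_Q_G[OF h1(1)] h1(2)) (use BC BD in blast)
      have f2: "f h2 \<in> G" by (intro F_P_G[OF h2(1)] h2(2)) (use BC CD in blast)
      have "f (h2 \<circ> h1) \<in> G" using F_mult f1 f2 G_comp by simp
      moreover have "(h2 \<circ> h1) ` C \<subseteq> W" using h1(3) h2(3) by (auto simp: image_comp[symmetric])
      ultimately show ?thesis using G_comp h1(1) h2(1) by blast
    qed
  qed
  then obtain h where h: "h \<in> G" "f h \<in> G" "h ` C \<subseteq> W" by blast
  define \<rho> where "\<rho> = iv h \<circ> \<gamma> \<circ> h"
  have \<rho>G: "\<rho> \<in> G" using G_comp G_inv h(1) gG by (simp add: \<rho>_def)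
  have \<rho>C: "\<rho> p = p" if "p \<in> C" for p
  proof -
    have "h p \<notin> A" using h(3) that by (auto simp: W_def)
    then have "\<gamma> (h p) = h p" using sA by (auto simp: supp_def)
    then show ?thesis using G_bij[OF h(1)] by (simp add: \<rho>_def iv_left)
  qed
  have f\<rho>: "f \<rho> \<in> G" using F_P_G[OF \<rho>G \<rho>C] .
  have "\<gamma> = h \<circ> \<rho> \<circ> iv h"
    by (rule ext) (simp add: \<rho>_def iv_right[OF G_bij[OF h(1)]])
  then have "f \<gamma> = f h \<circ> f \<rho> \<circ> f (iv h)"
    by (simp only: F_mult)
  also have "f (iv h) = iv (f h)" by (rule F_inv[OF G_bij[OF h(1)]])
  finally have "f \<gamma> = f h \<circ> f \<rho> \<circ> iv (f h)" .
  then show ?thesis using G_comp[OF G_inv[OF h(2)] G_comp[OF f\<rho> h(2)]] by (simp only:)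
qed

lemma part1: assumes "\<gamma> \<in> G" shows "f \<gamma> \<in> G"
proof -
  let ?S = "{g \<in> G. \<exists>A\<in>K_C. supp g \<subseteq> A}"
  have "\<gamma> \<in> generate Homeo ?S" using assms gen by (simp add: gen_by_small_support_def)
  then show ?thesis
  proof (induction rule: generate.induct)
    case one
    have "\<one>\<^bsub>Homeo\<^esub> = id" by (simp add: Homeo_def)
    then show ?case using F_id[unfolded id_def] G_id[unfolded id_def] by simp
  next
    case (incl h)
    then obtain A where "h \<in> G" "A \<in> K_C" "supp h \<subseteq> A" by blast
    then show ?case by (rule part1_small)
  next
    case (inv h)
    then obtain A where "h \<in> G" "A \<in> K_C" "supp h \<subseteq> A" by blast
    then have "h \<in> G" "f h \<in> G" using part1_small by auto
    then show ?case using Homeo_inv[OF G_carr] F_inv G_bij G_inv by simp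
  next
    case (eng h1 h2)
    have "h1 \<otimes>\<^bsub>Homeo\<^esub> h2 = h2 \<circ> h1" by (simp add: Homeo_def)
    show ?case unfolding \<open>h1 \<otimes>\<^bsub>Homeo\<^esub> h2 = h2 \<circ> h1\<close> F_mult by (rule G_comp[OF eng.IH])
  qed
qed


lemma part2:
  assumes \<sigma>G: "\<sigma> \<in> G" and \<sigma>X: "\<And>p. p \<notin> range \<epsilon> \<Longrightarrow> \<sigma> p = p"
  shows "\<exists>\<gamma>\<in>G. f \<gamma> = \<sigma>"
proof -
  have \<sigma>bij: "bij \<sigma>" using G_bij[OF \<sigma>G] .
  have \<sigma>X': "\<sigma> x \<in> range \<epsilon>" if "x \<in> range \<epsilon>" for x
  proof (rule ccontr)
    assume a: "\<sigma> x \<notin> range \<epsilon>"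
    then have "\<sigma> (\<sigma> x) = \<sigma> x" using \<sigma>X by blast
    then have "\<sigma> x = x" using bij_is_inj[OF \<sigma>bij] by (simp add: inj_eq)
    then show False using a that by simp
  qed
  define \<gamma> where "\<gamma> = iv \<epsilon> \<circ> \<sigma> \<circ> \<epsilon>"
  have f\<gamma>: "f \<gamma> = \<sigma>"
  proof (rule ext)
    fix p show "f \<gamma> p = \<sigma> p"
    proof (cases "p \<in> range \<epsilon>")
      case True
      then have "f \<gamma> p = \<epsilon> (iv \<epsilon> (\<sigma> p))" by (simp add: F_apply \<gamma>_def ee2)
      also have "\<dots> = \<sigma> p" using ee2[OF \<sigma>X'[OF True]] .
      finally show ?thesis .
    next
      case False then show ?thesis using \<sigma>X by (simp add: F_apply)
    qed
  qed
  have inj\<gamma>: "inj \<gamma>"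
  proof (rule injI)
    fix x y assume "\<gamma> x = \<gamma> y"
    then have "\<epsilon> (iv \<epsilon> (\<sigma> (\<epsilon> x))) = \<epsilon> (iv \<epsilon> (\<sigma> (\<epsilon> y)))" by (simp add: \<gamma>_def)
    then have "\<sigma> (\<epsilon> x) = \<sigma> (\<epsilon> y)" using ee2[OF \<sigma>X'[OF rangeI]] by simp
    then have "\<epsilon> x = \<epsilon> y" using bij_is_inj[OF \<sigma>bij] by (simp add: inj_eq)
    then show "x = y" using inj_eps by (simp add: inj_eq)
  qed
  define S1 where "S1 = (C \<union> D) \<inter> iv \<sigma> ` (C \<union> D)"
  define S2 where "S2 = iv \<delta> ` (\<delta> ` B \<inter> iv \<sigma> ` (C \<union> D))"
  have clCD: "clopen_C (C \<union> D)" using clC clD clopen_Un by auto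
  have iv\<sigma>: "iv \<sigma> \<in> carrier Homeo" using G_carr G_inv \<sigma>G by blast
  have iv\<delta>: "iv \<delta> \<in> carrier Homeo" using G_carr G_inv dG' by blast
  have clS1: "clopen_C S1" unfolding S1_def
    using clopen_Int[OF clCD clopen_image[OF iv\<sigma> clCD]] .
  have clS2: "clopen_C S2" unfolding S2_def
    using clopen_image[OF iv\<delta> clopen_Int[OF clopen_image[OF G_carr[OF dG'] clB] clopen_image[OF iv\<sigma> clCD]]] .
  have S1_good: "\<gamma> q \<in> C \<union> D" if qS: "q \<in> S1" for q
  proof -
    obtain y where y: "y \<in> C \<union> D" "q = iv \<sigma> y" "q \<in> C \<union> D" using qS unfolding S1_def by blast
    have qB: "q \<notin> B" using y(3) BC BD by blast
    have yB: "y \<notin> B" using y(1) BC BD by blast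
    have "\<gamma> q = iv \<epsilon> y" using eps_nB[OF qB] y(2) iv_right[OF \<sigma>bij] by (simp add: \<gamma>_def)
    also have "\<dots> = y" using rng_nB[OF yB] by simp
    finally show ?thesis using y(1) by simp
  qed
  have S2_good: "\<gamma> q \<in> C \<union> D" if qS: "q \<in> S2" for q
  proof -
    obtain x where x: "x \<in> \<delta> ` B" "x \<in> iv \<sigma> ` (C \<union> D)" "q = iv \<delta> x" using qS unfolding S2_def by blast
    obtain b where b: "b \<in> B" "x = \<delta> b" using x(1) by blast
    obtain y where y: "y \<in> C \<union> D" "x = iv \<sigma> y" using x(2) by blast
    have qb: "q = b" using x(3) b(2) iv_left[OF dbij] by simp
    have yB: "y \<notin> B" using y(1) BC BD by blast
    have \<sigma>x: "\<sigma> x = y" using y(2) iv_right[OF \<sigma>bij] by simp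
    have "\<gamma> q = iv \<epsilon> y" using eps_B[OF b(1)] qb b(2) \<sigma>x by (simp add: \<gamma>_def)
    also have "\<dots> = y" using rng_nB[OF yB] by simp
    finally show ?thesis using y(1) by simp
  qed
  have S1sub: "S1 \<subseteq> C \<union> D" by (auto simp: S1_def)
  have S2sub: "S2 \<subseteq> B"
  proof
    fix q assume "q \<in> S2"
    then obtain b where "b \<in> B" "q = iv \<delta> (\<delta> b)" by (auto simp: S2_def)
    then show "q \<in> B" using iv_left[OF dbij] by simp
  qed
  have S_ne: "S1 \<noteq> {} \<or> S2 \<noteq> {}"
  proof -
    obtain c where c: "c \<in> C" using neC by blast
    define x where "x = iv \<sigma> c"
    have \<sigma>x: "\<sigma> x = c" using iv_right[OF \<sigma>bij] by (simp add: x_def)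
    have cB: "c \<notin> B" using c BC by blast
    have xr: "x \<in> range \<epsilon>"
    proof (rule ccontr)
      assume "x \<notin> range \<epsilon>"
      then have "x = c" using \<sigma>X \<sigma>x by metis
      then show False using rng_nB[OF cB] \<open>x \<notin> range \<epsilon>\<close> by simp
    qed
    have xi: "x \<in> iv \<sigma> ` (C \<union> D)" using c by (simp add: x_def)
    show ?thesis
    proof (cases "x \<in> B")
      case True
      obtain r where r: "x = \<epsilon> r" using xr by blast
      have rB: "r \<in> B"
      proof (rule ccontr)
        assume "r \<notin> B" then have "x = r" using r eps_nB by simp
        then show False using True \<open>r \<notin> B\<close> by simp
      qed
      have xd: "x = \<delta> r" using r eps_B[OF rB] by simp
      have "iv \<delta> x \<in> S2" unfolding S2_def using xd rB xi by blast
      then show ?thesis by blast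
    next
      case False
      then have "x \<in> C \<union> D" using UNIV_BCD by blast
      then have "x \<in> S1" unfolding S1_def using xi by blast
      then show ?thesis by blast
    qed
  qed
  obtain T where T: "clopen_C T" "T \<noteq> {}" "T \<subset> UNIV" "\<And>q. q \<in> T \<Longrightarrow> \<gamma> q \<in> C \<union> D"
  proof (cases "S1 \<noteq> {}")
    case True
    have "T \<subset> UNIV" if "T \<subseteq> C \<union> D" for T using that neB BC BD by blast
    then show ?thesis using that[OF clS1 True] S1sub S1_good by blast
  next
    case False
    then have ne2: "S2 \<noteq> {}" using S_ne by blast
    have "S2 \<subset> UNIV" using S2sub neC BC by blast
    then show ?thesis using that[OF clS2 ne2] S2_good by blast
  qed
  have CU: "C \<subset> UNIV" using nuC by (simp add: psubset_eq)
  have "\<exists>g\<in>G. supp g \<subseteq> UNIV \<and> g ` C \<subseteq> T"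
    by (rule vig[unfolded vigorous_def, rule_format]) (use clopen_UNIV clC T(1) neC T(2) CU T(3) in auto)
  then obtain g where g: "g \<in> G" "True" "g ` C \<subseteq> T" by blast
  define \<gamma>' where "\<gamma>' = \<gamma> \<circ> g"
  have f\<gamma>': "f \<gamma>' \<in> G" unfolding \<gamma>'_def F_mult f\<gamma> by (rule G_comp[OF part1[OF g(1)] \<sigma>G])
  have fbij: "bij (f \<gamma>')" using G_bij[OF f\<gamma>'] .
  have agree: "f \<gamma>' p = \<gamma>' p" if "p \<in> C" for p
  proof -
    have pB: "p \<notin> B" using that BC by blast
    have "\<gamma>' p \<in> C \<union> D" using T(4) g(3) that by (auto simp: \<gamma>'_def)
    then have gB: "\<gamma>' p \<notin> B" using BC BD by blast
    show ?thesis using rng_nB[OF pB] eps_nB[OF gB] by (simp add: F_apply)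
  qed
  define \<kappa> where "\<kappa> = iv (f \<gamma>') \<circ> \<gamma>'"
  have \<kappa>C: "\<kappa> p = p" if "p \<in> C" for p
    using agree[OF that, symmetric] iv_left[OF fbij] by (simp add: \<kappa>_def)
  have inj\<gamma>': "inj \<gamma>'" unfolding \<gamma>'_def using inj\<gamma> G_inj[OF g(1)] by (rule inj_compose)
  have inj\<kappa>: "inj \<kappa>" unfolding \<kappa>_def
    using G_inj[OF G_inv[OF f\<gamma>']] inj\<gamma>' by (rule inj_compose)
  have f\<kappa>: "f \<kappa> \<in> G"
  proof -
    have "f \<kappa> = iv (f (f \<gamma>')) \<circ> f \<gamma>'" unfolding \<kappa>_def F_mult F_inv[OF fbij] ..
    then show ?thesis using G_comp[OF f\<gamma>' G_inv[OF part1[OF f\<gamma>']]] by simp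
  qed
  have e\<kappa>: "f \<kappa> = \<delta> \<circ> \<kappa> \<circ> iv \<delta>" using F_P[OF inj\<kappa> \<kappa>C] .
  have "\<kappa> = iv \<delta> \<circ> f \<kappa> \<circ> \<delta>"
    by (rule ext) (simp add: e\<kappa> iv_left[OF dbij])
  then have \<kappa>G: "\<kappa> \<in> G" using G_comp[OF dG' G_comp[OF f\<kappa> G_inv[OF dG']]] by simp
  have "\<gamma>' = f \<gamma>' \<circ> \<kappa>" by (rule ext) (simp add: \<kappa>_def iv_right[OF fbij])
  then have \<gamma>'G: "\<gamma>' \<in> G" using G_comp[OF \<kappa>G f\<gamma>'] by simp
  have "\<gamma> = \<gamma>' \<circ> iv g" by (rule ext) (simp add: \<gamma>'_def iv_right[OF G_bij[OF g(1)]])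
  then have "\<gamma> \<in> G" using G_comp[OF G_inv[OF g(1)] \<gamma>'G] by simp
  then show ?thesis using f\<gamma> by blast
qed

lemma main: "f \<in> iso (Homeo\<lparr>carrier := G\<rparr>) (Homeo\<lparr>carrier := pstab G (- range \<epsilon>)\<rparr>)"
proof -
  have into: "f \<gamma> \<in> pstab G (- range \<epsilon>)" if "\<gamma> \<in> G" for \<gamma>
    using part1[OF that] by (simp add: pstab_def F_apply)
  have hom: "f \<in> hom (Homeo\<lparr>carrier := G\<rparr>) (Homeo\<lparr>carrier := pstab G (- range \<epsilon>)\<rparr>)"
    unfolding hom_def using into by (auto simp: Homeo_def F_mult)
  have inj: "inj_on f G"
  proof (rule inj_onI)
    fix x y assume "x \<in> G" "y \<in> G" "f x = f y"
    have "x q = y q" for q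
    proof -
      have "\<epsilon> (x q) = \<epsilon> (y q)" using F_eps[of x q] F_eps[of y q] \<open>f x = f y\<close> by simp
      then show ?thesis using inj_eps by (simp add: inj_eq)
    qed
    then show "x = y" by (rule ext)
  qed
  have img: "f ` G = pstab G (- range \<epsilon>)"
  proof
    show "f ` G \<subseteq> pstab G (- range \<epsilon>)" using into by blast
    show "pstab G (- range \<epsilon>) \<subseteq> f ` G"
    proof
      fix \<sigma> assume "\<sigma> \<in> pstab G (- range \<epsilon>)"
      then have "\<sigma> \<in> G" "\<And>p. p \<notin> range \<epsilon> \<Longrightarrow> \<sigma> p = p" by (auto simp: pstab_def)
      then show "\<sigma> \<in> f ` G" using part2 by blast
    qed
  qed
  show ?thesis unfolding iso_def using hom inj img by (simp add: bij_betw_def)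
qed

end

theorem lemma2p10:
  fixes G :: "(cpt \<Rightarrow> cpt) set" and B C D :: "cpt set" and \<delta> \<epsilon> :: "cpt \<Rightarrow> cpt"
    and f :: "(cpt \<Rightarrow> cpt) \<Rightarrow> (cpt \<Rightarrow> cpt)"
  assumes "subgroup G Homeo" and "vigorous G" and "gen_by_small_support G"
    and "B \<in> K_C" and "C \<in> K_C" and "D \<in> K_C"
    and "B \<inter> C = {}" and "B \<inter> D = {}" and "C \<inter> D = {}"
    and "B \<union> C \<union> D = topspace cantor"
    and "\<delta> \<in> pstab G D" and "\<delta> ` B \<subset> B"
    and "\<epsilon> = (\<lambda>p. if p \<in> B then \<delta> p else p)"
    and "f = (\<lambda>\<gamma> p. if p \<in> range \<epsilon> then \<epsilon> (\<gamma> (inv_into UNIV \<epsilon> p)) else p)"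
  shows "f \<in> iso (Homeo\<lparr>carrier := G\<rparr>) (Homeo\<lparr>carrier := pstab G (- range \<epsilon>)\<rparr>)"
proof -
  interpret L2 G B C D \<delta> \<epsilon> f by (rule L2.intro) (rule assms)+
  show ?thesis by (rule main)
qed

end
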